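(* Let $k,n$ be positive integers and $\tilde n\le n$ a positive real parameter. For every $\mathsf{Path}_k$-join tree $T$ and every $\mathsf{Path}_k$-pathset $\mathcal A$, \[\chi_T(\mathcal A)\ge\tilde n^{\Psi(T)}\cdot\mu(\mathcal A).\]
   Context: Graphs are finite simple graphs without isolated vertices; $\emptyset$ is the empty graph. $\mathsf{Path}_{\mathbb Z}$ has vertex set $\mathbb Z$ and edges $\{i-1,i\}$; $\mathsf{Path}_k$ is its subgraph with vertices $0,\dots,k$ and edges $\{i-1,i\}$, $1\le i\le k$. $\Delta(G)$ = number of connected components; $G\ominus F$ = union of components of $G$ sharing no vertex with $F$; $\Delta(G\mid F):=\Delta(G\ominus F)$; $\vec\Delta(H_1,\dots,H_r)=\sum_l\Delta(H_l\ominus(H_1\cup\dots\cup H_{l-1}))$. Join trees: for $G\subseteq\mathsf{Path}_k$, a $G$-join tree is a finite rooted binary tree (each non-leaf has an ordered left and right child) with nodes labeled by subgraphs of $G$: leaves by single-edge subgraphs of $G$ or $\emptyset$, each non-leaf by the union of its children's labels, the root by $G$. $T_1\cup T_2$ is the join tree with a new root whose left subtree is $T_1$ and right subtree $T_2$. For a $G$-join tree $T$ and a root-to-leaf path $b_1,\dots,b_\ell$, let $B_j$ ($j<\ell$) be the label of the child of $b_j$ other than $b_{j+1}$ and $B_\ell$ the label of leaf $b_\ell$; $\{B_1,\dots,B_\ell\}$ is a $T$-branch covering. $\Psi(T)$ is the maximum of $\vec\Delta(C_1,\dots,C_r)$ over all $T$-branch coverings $\mathcal C$ and all enumerations $C_1,\dots,C_r$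 (without repetition) of $\mathcal C$. Relations and pathsets: a $G$-relation is a set $\mathcal A\subseteq[n]^{V(G)}$. $\mathcal A\bowtie\mathcal B=\{\gamma\in[n]^{V(G)\cup V(H)}:\gamma_{V(G)}\in\mathcal A,\ \gamma_{V(H)}\in\mathcal B\}$ for a $G$-relation $\mathcal A$ and $H$-relation $\mathcal B$. $\mu(\mathcal A)=|\mathcal A|/n^{|V(G)|}$; for a graph $F$ with $I=V(F)\cap V(G)$, $\mu(\mathcal A\mid F)=\max_{\beta\in[n]^{V(F)}}|\{\alpha\in\mathcal A:\alpha_I=\beta_I\}|/n^{|V(G)\setminus V(F)|}$. A $G$-pathset is a $G$-relation $\mathcal A$ with $\mu(\mathcal A\mid F)\le(1/\tilde n)^{\Delta(G\mid F)}$ for all $F\subseteq\mathsf{Path}_k$; $\mathscr P_G$ denotes the set of $G$-pathsets. Pathset complexity: for a $G$-join tree $T$ and $\mathcal A\in\mathscr P_G$: if $T$ is a single node, $\chi_T(\mathcal A)=0$ if $G=\emptyset$ or $\mathcal A=\emptyset$ and $1$ otherwise; if $T=T_1\cup T_2$ with $T_i$ a $G_i$-join tree, $\chi_T(\mathcal A)$ is the minimum, over finite families $\{(\mathcal A_i,\mathcal B_i,\mathcal C_i)\}_i\subseteq\mathscr P_G\times\mathscr P_{G_1}\times\mathscr P_{G_2}$ with $\mathcal A_i\subseteq\mathcal B_i\bowtie\mathcal C_i$ and $\mathcal A\subseteq\bigcup_i\mathcal A_i$, of $\sum_i\max\{\chi_{T_1}(\mathcal B_i),\chi_{T_2}(\mathcal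 C_i)\}$. *)

theory Defs
  imports Complex_Main "HOL-Library.FuncSet"
begin

text \<open>A subgraph of Path_Z (finite, no isolated vertices) is represented by the set of
  integers i such that the edge {i-1,i} belongs to it. The empty graph is {}.\<close>

type_synonym pgraph = "int set"

definition Path :: "nat \<Rightarrow> pgraph" where
  "Path k = {1..int k}"

definition verts :: "pgraph \<Rightarrow> int set" where
  "verts G = (\<Union>i\<in>G. {i - 1, i})"

definition padj :: "pgraph \<Rightarrow> (int \<times> int) set" where
  "padj G = {(u, v). \<exists>i\<in>G. (u = i - 1 \<and> v = i) \<or> (u = i \<and> v = i - 1)}"

definition comp_of :: "pgraph \<Rightarrow> int \<Rightarrow> int set" where
  "comp_of G v = (padj G)\<^sup>* `` {v}"

definition ncomp :: "pgraph \<Rightarrow> nat" where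
  "ncomp G = card (comp_of G ` verts G)"

definition gminus :: "pgraph \<Rightarrow> pgraph \<Rightarrow> pgraph" where
  "gminus G F = {i \<in> G. comp_of G i \<inter> verts F = {}}"

definition ncomp_rel :: "pgraph \<Rightarrow> pgraph \<Rightarrow> nat" where
  "ncomp_rel G F = ncomp (gminus G F)"

definition vec_ncomp :: "pgraph list \<Rightarrow> nat" where
  "vec_ncomp Hs = (\<Sum>l<length Hs. ncomp (gminus (Hs ! l) (\<Union> (set (take l Hs)))))"

datatype jtree = JLeaf pgraph | JNode jtree jtree

primrec jlabel :: "jtree \<Rightarrow> pgraph" where
  "jlabel (JLeaf E) = E"
| "jlabel (JNode T1 T2) = jlabel T1 \<union> jlabel T2"

primrec leaves_ok :: "jtree \<Rightarrow> bool" where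
  "leaves_ok (JLeaf E) = (E = {} \<or> (\<exists>i. E = {i}))"
| "leaves_ok (JNode T1 T2) = (leaves_ok T1 \<and> leaves_ok T2)"

definition join_tree :: "pgraph \<Rightarrow> jtree \<Rightarrow> bool" where
  "join_tree G T = (leaves_ok T \<and> jlabel T = G)"

text \<open>Lists (B_1,...,B_l) obtained from root-to-leaf paths.\<close>
primrec branch_lists :: "jtree \<Rightarrow> pgraph list set" where
  "branch_lists (JLeaf E) = {[E]}"
| "branch_lists (JNode T1 T2) =
     {jlabel T2 # bs | bs. bs \<in> branch_lists T1} \<union> {jlabel T1 # bs | bs. bs \<in> branch_lists T2}"

definition branch_coverings :: "jtree \<Rightarrow> pgraph set set" where
  "branch_coverings T = set ` branch_lists T"

definition Psi :: "jtree \<Rightarrow> nat" where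
  "Psi T = Max {vec_ncomp Cs | Cs. \<exists>C\<in>branch_coverings T. distinct Cs \<and> set Cs = C}"

definition assigns :: "nat \<Rightarrow> int set \<Rightarrow> (int \<Rightarrow> nat) set" where
  "assigns n V = PiE V (\<lambda>_. {1..n})"

definition is_relation :: "nat \<Rightarrow> pgraph \<Rightarrow> (int \<Rightarrow> nat) set \<Rightarrow> bool" where
  "is_relation n G A = (A \<subseteq> assigns n (verts G))"

definition rjoin :: "nat \<Rightarrow> pgraph \<Rightarrow> (int \<Rightarrow> nat) set \<Rightarrow> pgraph \<Rightarrow> (int \<Rightarrow> nat) set
    \<Rightarrow> (int \<Rightarrow> nat) set" where
  "rjoin n G A H B = {\<gamma> \<in> assigns n (verts G \<union> verts H).
      restrict \<gamma> (verts G) \<in> A \<and> restrict \<gamma> (verts H) \<in> B}"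

definition mu :: "nat \<Rightarrow> pgraph \<Rightarrow> (int \<Rightarrow> nat) set \<Rightarrow> real" where
  "mu n G A = real (card A) / real n ^ card (verts G)"

definition mu_cond :: "nat \<Rightarrow> pgraph \<Rightarrow> (int \<Rightarrow> nat) set \<Rightarrow> pgraph \<Rightarrow> real" where
  "mu_cond n G A F =
     (let I = verts F \<inter> verts G in
      Max ((\<lambda>\<beta>. real (card {\<alpha> \<in> A. restrict \<alpha> I = restrict \<beta> I})
                 / real n ^ card (verts G - verts F)) ` assigns n (verts F)))"

definition pathset :: "nat \<Rightarrow> nat \<Rightarrow> real \<Rightarrow> pgraph \<Rightarrow> (int \<Rightarrow> nat) set \<Rightarrow> bool" where
  "pathset k n nt G A = (is_relation n G A \<and>
     (\<forall>F. F \<subseteq> Path k \<longrightarrow> mu_cond n G A F \<le> (1 / nt) ^ ncomp_rel G F))"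

primrec chi :: "nat \<Rightarrow> nat \<Rightarrow> real \<Rightarrow> jtree \<Rightarrow> (int \<Rightarrow> nat) set \<Rightarrow> nat" where
  "chi k n nt (JLeaf E) = (\<lambda>A. if E = {} \<or> A = {} then 0 else 1)"
| "chi k n nt (JNode T1 T2) = (\<lambda>A. Inf
     {sum_list (map (\<lambda>(A', B, C). max (chi k n nt T1 B) (chi k n nt T2 C)) fam) | fam.
        (\<forall>(A', B, C) \<in> set fam.
            pathset k n nt (jlabel T1 \<union> jlabel T2) A' \<and>
            pathset k n nt (jlabel T1) B \<and> pathset k n nt (jlabel T2) C \<and>
            A' \<subseteq> rjoin n (jlabel T1) B (jlabel T2) C)
        \<and> A \<subseteq> (\<Union>(A', B, C) \<in> set fam. A')})"

end

theory Submission
  imports Defs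
begin


definition proj :: "pgraph \<Rightarrow> (int \<Rightarrow> nat) set \<Rightarrow> (int \<Rightarrow> nat) set" where
  "proj H X = (\<lambda>x. restrict x (verts H)) ` X"

lemma verts_Un: "verts (A \<union> B) = verts A \<union> verts B"
  unfolding verts_def by blast

lemma verts_mono: "A \<subseteq> B \<Longrightarrow> verts A \<subseteq> verts B"
  unfolding verts_def by blast

lemma verts_empty[simp]: "verts {} = {}"
  unfolding verts_def by simp

lemma finite_verts: "finite G \<Longrightarrow> finite (verts G)"
  unfolding verts_def by simp

lemma finite_Path: "finite (Path k)"
  unfolding Path_def by simp

lemma finite_assigns: "finite V \<Longrightarrow> finite (assigns n V)"
  unfolding assigns_def by (simp add: finite_PiE)

lemma assigns_ne: "n > 0 \<Longrightarrow> assigns n V \<noteq> {}"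
  unfolding assigns_def by (simp add: PiE_eq_empty_iff)

lemma restrict_assigns: "x \<in> assigns n V \<Longrightarrow> W \<subseteq> V \<Longrightarrow> restrict x W \<in> assigns n W"
  unfolding assigns_def by (auto simp: PiE_iff)

lemma restrict_id: "x \<in> assigns n V \<Longrightarrow> restrict x V = x"
  unfolding assigns_def by simp

lemma mu_cond_ge:
  assumes "finite F" "\<beta> \<in> assigns n (verts F)"
  shows "real (card {\<alpha> \<in> A. restrict \<alpha> (verts F \<inter> verts G) = restrict \<beta> (verts F \<inter> verts G)})
                 / real n ^ card (verts G - verts F) \<le> mu_cond n G A F"
  unfolding mu_cond_def Let_def
  by (rule Max_ge) (use assms in \<open>auto intro: finite_assigns finite_verts\<close>)

lemma mu_cond_leI:
  assumes "finite F" "n > 0"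
    "\<And>\<beta>. \<beta> \<in> assigns n (verts F) \<Longrightarrow> real (card {\<alpha> \<in> A. restrict \<alpha> (verts F \<inter> verts G) = restrict \<beta> (verts F \<inter> verts G)})
                 / real n ^ card (verts G - verts F) \<le> c"
  shows "mu_cond n G A F \<le> c"
  unfolding mu_cond_def Let_def
  using assms by (subst Max_le_iff) (auto intro: finite_assigns finite_verts simp: assigns_ne)



lemma pathset_mono:
  assumes "n > 0" "pathset k n nt G P" "Q \<subseteq> P" "finite G"
  shows "pathset k n nt G Q"
  unfolding pathset_def
proof (intro conjI allI impI)
  show "is_relation n G Q" using assms(2,3) unfolding pathset_def is_relation_def by (meson order_trans)
next
  fix F assume F: "F \<subseteq> Path k"
  have fF: "finite F" using F finite_Path by (rule finite_subset)
  have "P \<subseteq> assigns n (verts G)" using assms(2) unfolding pathset_def is_relation_def by simp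
  hence fP: "finite P" by (rule finite_subset[OF _ finite_assigns[OF finite_verts[OF assms(4)]]])
  have "mu_cond n G Q F \<le> mu_cond n G P F"
  proof (rule mu_cond_leI[OF fF \<open>n>0\<close>])
    fix \<beta> assume b: "\<beta> \<in> assigns n (verts F)"
    have "card {\<alpha> \<in> Q. restrict \<alpha> (verts F \<inter> verts G) = restrict \<beta> (verts F \<inter> verts G)}
       \<le> card {\<alpha> \<in> P. restrict \<alpha> (verts F \<inter> verts G) = restrict \<beta> (verts F \<inter> verts G)}"
      by (rule card_mono) (use fP assms(3) in \<open>auto intro: finite_subset\<close>)
    hence "real (card {\<alpha> \<in> Q. restrict \<alpha> (verts F \<inter> verts G) = restrict \<beta> (verts F \<inter> verts G)})
                 / real n ^ card (verts G - verts F) \<le> real (card {\<alpha> \<in> P. restrict \<alpha> (verts F \<inter> verts G) = restrict \<beta> (verts F \<inter> verts G)})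
                 / real n ^ card (verts G - verts F)"
      by (intro divide_right_mono) simp_all
    also have "\<dots> \<le> mu_cond n G P F" by (rule mu_cond_ge[OF fF b])
    finally show "real (card {\<alpha> \<in> Q. restrict \<alpha> (verts F \<inter> verts G) = restrict \<beta> (verts F \<inter> verts G)})
                 / real n ^ card (verts G - verts F) \<le> mu_cond n G P F" .
  qed
  also have "\<dots> \<le> (1 / nt) ^ ncomp_rel G F" using assms(2) F unfolding pathset_def by blast
  finally show "mu_cond n G Q F \<le> (1 / nt) ^ ncomp_rel G F" .
qed



lemma ncomp_gminus_le:
  assumes "finite G"
  shows "ncomp (gminus G F) \<le> card (verts G - verts F)"
proof -
  have sub: "verts (gminus G F) \<subseteq> verts G - verts F"
  proof
    fix v assume "v \<in> verts (gminus G F)"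
    then obtain i where i: "i \<in> G" "comp_of G i \<inter> verts F = {}" "v = i - 1 \<or> v = i"
      unfolding verts_def gminus_def by auto
    have "v \<in> comp_of G i"
    proof (cases "v = i")
      case True thus ?thesis unfolding comp_of_def by auto
    next
      case False
      hence "(i, v) \<in> padj G" using i unfolding padj_def by auto
      thus ?thesis unfolding comp_of_def by auto
    qed
    with i show "v \<in> verts G - verts F" unfolding verts_def by auto
  qed
  have "ncomp (gminus G F) \<le> card (verts (gminus G F))"
    unfolding ncomp_def by (rule card_image_le) (use sub finite_verts[OF assms] finite_subset in blast)
  also have "\<dots> \<le> card (verts G - verts F)"
    by (rule card_mono) (use sub finite_verts[OF assms] in auto)
  finally show ?thesis .
qed

lemma singleton_pathset:
  assumes "n > 0" "nt > 0" "nt \<le> real n" "finite G" "\<alpha> \<in> assigns n (verts G)"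
  shows "pathset k n nt G {\<alpha>}"
  unfolding pathset_def
proof (intro conjI allI impI)
  show "is_relation n G {\<alpha>}" using assms unfolding is_relation_def by auto
next
  fix F assume F: "F \<subseteq> Path k"
  have fF: "finite F" using F finite_Path finite_subset by blast
  define m where "m = card (verts G - verts F)"
  have c: "ncomp_rel G F \<le> m" unfolding ncomp_rel_def m_def by (rule ncomp_gminus_le[OF assms(4)])
  have key: "(1 / real n) ^ m \<le> (1 / nt) ^ ncomp_rel G F"
  proof (cases "nt \<ge> 1")
    case True
    have "(1 / real n) ^ m \<le> (1 / nt) ^ m"
      by (rule power_mono) (use assms True in \<open>auto simp: divide_simps\<close>)
    also have "\<dots> \<le> (1 / nt) ^ ncomp_rel G F"
      by (rule power_decreasing) (use c True assms in auto)
    finally show ?thesis .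
  next
    case False
    have "(1 / real n) ^ m \<le> 1" using assms by (simp add: power_le_one)
    also have "1 \<le> (1 / nt) ^ ncomp_rel G F" using False assms by (simp add: one_le_power)
    finally show ?thesis .
  qed
  show "mu_cond n G {\<alpha>} F \<le> (1 / nt) ^ ncomp_rel G F"
  proof (rule mu_cond_leI[OF fF \<open>n>0\<close>])
    fix \<beta> assume b: "\<beta> \<in> assigns n (verts F)"
    have "card {\<alpha>' \<in> {\<alpha>}. restrict \<alpha>' (verts F \<inter> verts G) = restrict \<beta> (verts F \<inter> verts G)} \<le> 1"
      by (rule order_trans[OF card_mono[of "{\<alpha>}"]]) auto
    hence "real (card {\<alpha>' \<in> {\<alpha>}. restrict \<alpha>' (verts F \<inter> verts G) = restrict \<beta> (verts F \<inter> verts G)})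
           / real n ^ m \<le> 1 / real n ^ m"
      using assms by (simp add: divide_right_mono)
    also have "\<dots> = (1 / real n) ^ m" by (simp add: power_one_over)
    finally show "real (card {\<alpha>' \<in> {\<alpha>}. restrict \<alpha>' (verts F \<inter> verts G) = restrict \<beta> (verts F \<inter> verts G)})
           / real n ^ card (verts G - verts F) \<le> (1 / nt) ^ ncomp_rel G F"
      using key m_def by simp
  qed
qed



lemma vec_ncomp_snoc:
  "vec_ncomp (Hs @ [H]) = vec_ncomp Hs + ncomp (gminus H (\<Union>(set Hs)))"
proof -
  have "vec_ncomp (Hs @ [H]) = (\<Sum>l<Suc (length Hs). ncomp (gminus ((Hs @ [H]) ! l) (\<Union> (set (take l (Hs @ [H]))))))"
    unfolding vec_ncomp_def by simp
  also have "\<dots> = (\<Sum>l<length Hs. ncomp (gminus ((Hs @ [H]) ! l) (\<Union> (set (take l (Hs @ [H]))))))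
      + ncomp (gminus H (\<Union>(set Hs)))"
    by (simp add: nth_append)
  also have "(\<Sum>l<length Hs. ncomp (gminus ((Hs @ [H]) ! l) (\<Union> (set (take l (Hs @ [H])))))) = vec_ncomp Hs"
    unfolding vec_ncomp_def by (intro sum.cong) (auto simp: nth_append)
  finally show ?thesis .
qed

lemma fiber_inj:
  assumes "\<gamma>1 \<in> assigns n (V0 \<union> VH)" "\<gamma>2 \<in> assigns n (V0 \<union> VH)"
    "restrict \<gamma>1 V0 = restrict \<gamma>2 V0" "restrict \<gamma>1 VH = restrict \<gamma>2 VH"
  shows "\<gamma>1 = \<gamma>2"
proof (rule ext)
  fix x
  show "\<gamma>1 x = \<gamma>2 x"
  proof (cases "x \<in> V0")
    case True
    have "restrict \<gamma>1 V0 x = restrict \<gamma>2 V0 x" using assms(3) by simp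
    with True show ?thesis by simp
  next
    case F0: False
    show ?thesis
    proof (cases "x \<in> VH")
      case True
      have "restrict \<gamma>1 VH x = restrict \<gamma>2 VH x" using assms(4) by simp
      with True show ?thesis by simp
    next
      case False
      with F0 have "x \<notin> V0 \<union> VH" by simp
      then show ?thesis using assms(1,2) unfolding assigns_def by (metis PiE_arb)
    qed
  qed
qed

lemma chain_rule:
  assumes n: "n > 0" and nt: "nt > 0"
  shows "\<Union>(set Hs) \<subseteq> Path k \<Longrightarrow> X \<subseteq> assigns n (verts (\<Union>(set Hs)))
    \<Longrightarrow> (\<forall>H\<in>set Hs. H \<noteq> {} \<longrightarrow> pathset k n nt H (proj H X))
    \<Longrightarrow> real (card X) \<le> real n ^ card (verts (\<Union>(set Hs))) * (1/nt) ^ vec_ncomp Hs"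
proof (induction Hs arbitrary: X rule: rev_induct)
  case Nil
  have "X \<subseteq> {\<lambda>_. undefined}" using Nil.prems(2) unfolding assigns_def by simp
  hence "card X \<le> 1" using card_mono[of "{\<lambda>_. undefined}" X] by simp
  then show ?case unfolding vec_ncomp_def by simp
next
  case (snoc H Hs0)
  define G0 where "G0 = \<Union>(set Hs0)"
  define V0 where "V0 = verts G0"
  define VH where "VH = verts H"
  define X0 where "X0 = proj G0 X"
  have UG: "\<Union>(set (Hs0 @ [H])) = G0 \<union> H" unfolding G0_def by auto
  have subP: "G0 \<union> H \<subseteq> Path k" using snoc.prems(1) unfolding UG .
  have fG0: "finite G0" using subP finite_Path finite_subset by auto
  have fH: "finite H" using subP finite_Path finite_subset by auto
  have VU: "verts (\<Union>(set (Hs0 @ [H]))) = V0 \<union> VH" unfolding UG V0_def VH_def by (rule verts_Un)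
  have Xs: "X \<subseteq> assigns n (V0 \<union> VH)" using snoc.prems(2) VU by simp
  have X0s: "X0 \<subseteq> assigns n V0"
  proof
    fix b assume "b \<in> X0"
    then obtain x where "x \<in> X" "b = restrict x V0" unfolding X0_def proj_def V0_def by auto
    thus "b \<in> assigns n V0" using Xs restrict_assigns[of x n "V0 \<union> VH" V0] by auto
  qed
  have projeq: "proj H' X0 = proj H' X" if "H' \<in> set Hs0" for H'
  proof -
    have "verts H' \<subseteq> V0" unfolding V0_def G0_def using that by (intro verts_mono) auto
    hence "verts G0 \<inter> verts H' = verts H'" unfolding V0_def by auto
    thus ?thesis unfolding proj_def X0_def image_image by simp
  qed
  have IH: "real (card X0) \<le> real n ^ card V0 * (1/nt) ^ vec_ncomp Hs0"
    using snoc.IH[of X0] snoc.prems X0s projeq unfolding V0_def G0_def by auto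
  have "finite (V0 \<union> VH)" using fG0 fH finite_verts V0_def VH_def by simp
  hence fX: "finite X" using Xs finite_assigns finite_subset by metis
  show ?case
  proof (cases "H = {}")
    case True
    have "X0 = X" unfolding X0_def proj_def
    proof -
      have "\<forall>x\<in>X. restrict x (verts G0) = x" using Xs True VH_def V0_def restrict_id by auto
      thus "(\<lambda>x. restrict x (verts G0)) ` X = X" by simp
    qed
    moreover have "gminus H (\<Union>(set Hs0)) = {}" using True unfolding gminus_def by simp
    moreover have "ncomp {} = 0" unfolding ncomp_def verts_def by simp
    ultimately show ?thesis using IH VU True unfolding VH_def by (simp add: vec_ncomp_snoc)
  next
    case False
    have psH: "pathset k n nt H (proj H X)" using snoc.prems(3) False by simp
    have G0P: "G0 \<subseteq> Path k" using subP by simp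
    define c where "c = ncomp (gminus H G0)"
    define m where "m = card (VH - V0)"
    define fib where "fib \<beta> = {\<gamma> \<in> X. restrict \<gamma> V0 = \<beta>}" for \<beta>
    have fibbound: "real (card (fib \<beta>)) \<le> real n ^ m * (1/nt) ^ c" if b: "\<beta> \<in> X0" for \<beta>
    proof -
      define I where "I = verts G0 \<inter> verts H"
      have "card (fib \<beta>) \<le> card {\<alpha> \<in> proj H X. restrict \<alpha> I = restrict \<beta> I}"
      proof (rule card_inj_on_le[where f = "\<lambda>\<gamma>. restrict \<gamma> VH"])
        show "inj_on (\<lambda>\<gamma>. restrict \<gamma> VH) (fib \<beta>)"
        proof (rule inj_onI)
          fix x y assume "x \<in> fib \<beta>" "y \<in> fib \<beta>" "restrict x VH = restrict y VH"
          thus "x = y" unfolding fib_def using fiber_inj[of x n V0 VH y] Xs by auto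
        qed
        show "(\<lambda>\<gamma>. restrict \<gamma> VH) ` fib \<beta> \<subseteq> {\<alpha> \<in> proj H X. restrict \<alpha> I = restrict \<beta> I}"
        proof
          fix a assume "a \<in> (\<lambda>\<gamma>. restrict \<gamma> VH) ` fib \<beta>"
          then obtain \<gamma> where g: "\<gamma> \<in> X" "restrict \<gamma> V0 = \<beta>" "a = restrict \<gamma> VH"
            unfolding fib_def by auto
          have "restrict a I = restrict \<gamma> I" unfolding g(3) I_def VH_def by (simp add: Int_absorb1)
          also have "\<dots> = restrict \<beta> I" unfolding g(2)[symmetric] I_def V0_def by simp
          finally show "a \<in> {\<alpha> \<in> proj H X. restrict \<alpha> I = restrict \<beta> I}"
            using g unfolding proj_def VH_def by auto
        qed
        have "proj H X \<subseteq> assigns n (verts H)" using psH unfolding pathset_def is_relation_def by simp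
        hence fp: "finite (proj H X)" by (rule finite_subset[OF _ finite_assigns[OF finite_verts[OF fH]]])
        show "finite {\<alpha> \<in> proj H X. restrict \<alpha> I = restrict \<beta> I}"
          by (rule finite_subset[OF _ fp]) blast
      qed
      hence "real (card (fib \<beta>)) / real n ^ m \<le> real (card {\<alpha> \<in> proj H X. restrict \<alpha> I = restrict \<beta> I}) / real n ^ m"
        by (intro divide_right_mono) simp_all
      also have "\<dots> \<le> mu_cond n H (proj H X) G0"
        unfolding I_def m_def VH_def V0_def
        by (rule mu_cond_ge[OF fG0]) (use b X0s V0_def in auto)
      also have "\<dots> \<le> (1/nt) ^ c" using psH G0P unfolding pathset_def c_def ncomp_rel_def by blast
      finally have h: "real (card (fib \<beta>)) / real n ^ m \<le> (1/nt) ^ c" .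
      have npos: "real n ^ m > 0" using n by simp
      have "real (card (fib \<beta>)) \<le> (1/nt) ^ c * real n ^ m" using h npos by (simp only: pos_divide_le_eq)
      thus ?thesis by (simp only: mult.commute)
    qed
    have Xfib: "X = (\<Union>\<beta>\<in>X0. fib \<beta>)" unfolding fib_def X0_def proj_def V0_def by auto
    have fX0: "finite X0" unfolding X0_def proj_def using fX by simp
    have "card X = (\<Sum>\<beta>\<in>X0. card (fib \<beta>))"
      unfolding Xfib
      by (rule card_UN_disjoint[OF fX0]) (use fX in \<open>auto simp: fib_def\<close>)
    hence "real (card X) = (\<Sum>\<beta>\<in>X0. real (card (fib \<beta>)))" by simp
    also have "\<dots> \<le> (\<Sum>\<beta>\<in>X0. real n ^ m * (1/nt) ^ c)" by (rule sum_mono) (rule fibbound)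
    also have "\<dots> = real (card X0) * (real n ^ m * (1/nt) ^ c)" by simp
    also have "\<dots> \<le> (real n ^ card V0 * (1/nt) ^ vec_ncomp Hs0) * (real n ^ m * (1/nt) ^ c)"
      by (rule mult_right_mono[OF IH]) (use nt in simp)
    also have "\<dots> = real n ^ (card V0 + m) * (1/nt) ^ (vec_ncomp Hs0 + c)"
      by (simp add: power_add)
    also have "card V0 + m = card (V0 \<union> VH)"
    proof -
      have "V0 \<union> VH = V0 \<union> (VH - V0)" by auto
      moreover have "finite V0" "finite VH" using fG0 fH finite_verts V0_def VH_def by auto
      ultimately show ?thesis unfolding m_def by (metis card_Un_disjoint Diff_disjoint finite_Diff)
    qed
    finally show ?thesis using VU unfolding c_def G0_def by (simp add: vec_ncomp_snoc)
  qed
qed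



lemma bl_ne: "branch_lists T \<noteq> {}"
  by (induction T) auto

lemma bl_sub: "bs \<in> branch_lists T \<Longrightarrow> H \<in> set bs \<Longrightarrow> H \<subseteq> jlabel T"
proof (induction T arbitrary: bs)
  case (JLeaf E) then show ?case by simp
next
  case (JNode T1 T2) then show ?case by fastforce
qed

lemma bl_union: "bs \<in> branch_lists T \<Longrightarrow> \<Union>(set bs) = jlabel T"
proof (induction T arbitrary: bs)
  case (JLeaf E) then show ?case by simp
next
  case (JNode T1 T2) then show ?case by fastforce
qed

lemma bl_finite: "finite (branch_lists T)"
proof (induction T)
  case (JLeaf E) then show ?case by simp
next
  case (JNode T1 T2)
  have e1: "{jlabel T2 # bs | bs. bs \<in> branch_lists T1} = (\<lambda>bs. jlabel T2 # bs) ` branch_lists T1" by auto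
  have e2: "{jlabel T1 # bs | bs. bs \<in> branch_lists T2} = (\<lambda>bs. jlabel T1 # bs) ` branch_lists T2" by auto
  show ?case using JNode by (simp only: branch_lists.simps e1 e2 finite_Un finite_imageI)
qed

lemma combine:
  "(\<forall>t\<in>set L. \<exists>xs. length xs \<le> c t \<and> fst t \<subseteq> \<Union>(set xs) \<and> (\<forall>x\<in>set xs. R x))
   \<Longrightarrow> \<exists>xs. length xs \<le> sum_list (map c L) \<and> (\<Union>t\<in>set L. fst t) \<subseteq> \<Union>(set xs) \<and> (\<forall>x\<in>set xs. R x)"
proof (induction L)
  case Nil
  then show ?case by (intro exI[of _ "[]"]) simp
next
  case (Cons a L)
  then obtain xs where xs: "length xs \<le> sum_list (map c L)" "(\<Union>t\<in>set L. fst t) \<subseteq> \<Union>(set xs)" "\<forall>x\<in>set xs. R x"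
    by auto
  from Cons.prems obtain ys where ys: "length ys \<le> c a" "fst a \<subseteq> \<Union>(set ys)" "\<forall>x\<in>set ys. R x" by auto
  show ?case
    by (rule exI[of _ "ys @ xs"]) (use xs ys in auto)
qed

lemma step:
  assumes n: "n > 0" and fGP: "finite Gp" and fGo: "finite Go"
    and A'sub: "A' \<subseteq> assigns n (verts (Gp \<union> Go))"
    and memb: "\<forall>\<gamma>\<in>A'. restrict \<gamma> (verts Gp) \<in> Bp \<and> restrict \<gamma> (verts Go) \<in> Co"
    and psC: "pathset k n nt Go Co"
    and sub: "\<forall>H\<in>set bsp. H \<subseteq> Gp"
    and IHp: "Gp \<noteq> {} \<Longrightarrow> \<exists>Xs. length Xs \<le> cp \<and> Bp \<subseteq> \<Union>(set Xs) \<and>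
       (\<forall>X\<in>set Xs. X \<subseteq> assigns n (verts Gp) \<and> (\<forall>H\<in>set bsp. H \<noteq> {} \<longrightarrow> pathset k n nt H (proj H X)))"
    and IHo: "Gp = {} \<Longrightarrow> Co \<noteq> {} \<Longrightarrow> co \<ge> 1"
  shows "\<exists>Xs. length Xs \<le> max cp co \<and> A' \<subseteq> \<Union>(set Xs) \<and>
       (\<forall>X\<in>set Xs. X \<subseteq> assigns n (verts (Gp \<union> Go)) \<and> (\<forall>H\<in>set (Go # bsp). H \<noteq> {} \<longrightarrow> pathset k n nt H (proj H X)))"
proof (cases "Gp = {}")
  case False
  then obtain Xs where Xs: "length Xs \<le> cp" "Bp \<subseteq> \<Union>(set Xs)"
    "\<forall>X\<in>set Xs. X \<subseteq> assigns n (verts Gp) \<and> (\<forall>H\<in>set bsp. H \<noteq> {} \<longrightarrow> pathset k n nt H (proj H X))"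
    using IHp by blast
  define Ys where "Ys = map (\<lambda>X. {\<gamma> \<in> A'. restrict \<gamma> (verts Gp) \<in> X}) Xs"
  have len: "length Ys \<le> max cp co" unfolding Ys_def using Xs(1) by simp
  have cov: "A' \<subseteq> \<Union>(set Ys)"
    proof
      fix \<gamma> assume g: "\<gamma> \<in> A'"
      then have "restrict \<gamma> (verts Gp) \<in> \<Union>(set Xs)" using memb Xs(2) by blast
      then obtain X where "X \<in> set Xs" "restrict \<gamma> (verts Gp) \<in> X" by blast
      then show "\<gamma> \<in> \<Union>(set Ys)" unfolding Ys_def using g by auto
    qed
  have props: "Y \<subseteq> assigns n (verts (Gp \<union> Go)) \<and> (\<forall>H\<in>set (Go # bsp). H \<noteq> {} \<longrightarrow> pathset k n nt H (proj H Y))"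
    if Y: "Y \<in> set Ys" for Y
  proof (rule conjI)
    from Y obtain X where X: "X \<in> set Xs" "Y = {\<gamma> \<in> A'. restrict \<gamma> (verts Gp) \<in> X}" unfolding Ys_def by auto
    show "Y \<subseteq> assigns n (verts (Gp \<union> Go))" using X A'sub by auto
    show "\<forall>H\<in>set (Go # bsp). H \<noteq> {} \<longrightarrow> pathset k n nt H (proj H Y)"
    proof (intro ballI impI)
      fix H assume H: "H \<in> set (Go # bsp)" "H \<noteq> {}"
      show "pathset k n nt H (proj H Y)"
      proof (cases "H = Go")
        case True
        have "proj H Y \<subseteq> Co" unfolding True proj_def X(2) using memb by auto
        then show ?thesis using pathset_mono[OF n psC _ fGo] True by simp
      next
        case False
        hence Hb: "H \<in> set bsp" using H by simp
        hence HG: "H \<subseteq> Gp" using sub by blast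
        hence vHG: "verts Gp \<inter> verts H = verts H" using verts_mono by blast
        have "proj H Y \<subseteq> proj H X"
        proof
          fix a assume "a \<in> proj H Y"
          then obtain \<gamma> where g: "\<gamma> \<in> Y" "a = restrict \<gamma> (verts H)" unfolding proj_def by auto
          have "a = restrict (restrict \<gamma> (verts Gp)) (verts H)" using g(2) vHG by simp
          moreover have "restrict \<gamma> (verts Gp) \<in> X" using g(1) X(2) by simp
          ultimately show "a \<in> proj H X" unfolding proj_def by blast
        qed
        moreover have "pathset k n nt H (proj H X)" using Xs(3) X(1) Hb H(2) by blast
        moreover have "finite H" using HG fGP finite_subset by blast
        ultimately show ?thesis using pathset_mono[OF n] by blast
      qed
    qed
  qed
  show ?thesis using len cov props by blast
next
  case True
  define Ys where "Ys = (if A' = {} then [] else [A'])"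
  have len: "length Ys \<le> max cp co"
    proof (cases "A' = {}")
      case False
      then obtain \<gamma> where "\<gamma> \<in> A'" by blast
      hence "Co \<noteq> {}" using memb by blast
      hence "co \<ge> 1" using IHo True by blast
      then show ?thesis unfolding Ys_def using False by simp
    qed (simp add: Ys_def)
  have cov: "A' \<subseteq> \<Union>(set Ys)" unfolding Ys_def by auto
  have props: "Y \<subseteq> assigns n (verts (Gp \<union> Go)) \<and> (\<forall>H\<in>set (Go # bsp). H \<noteq> {} \<longrightarrow> pathset k n nt H (proj H Y))"
    if Y: "Y \<in> set Ys" for Y
  proof (rule conjI)
    from Y have YA: "Y = A'" unfolding Ys_def by (auto split: if_splits)
    show "Y \<subseteq> assigns n (verts (Gp \<union> Go))" using YA A'sub by simp
    show "\<forall>H\<in>set (Go # bsp). H \<noteq> {} \<longrightarrow> pathset k n nt H (proj H Y)"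
    proof (intro ballI impI)
      fix H assume H: "H \<in> set (Go # bsp)" "H \<noteq> {}"
      have "H = Go" using H sub True by auto
      have "proj H Y \<subseteq> Co" unfolding \<open>H = Go\<close> proj_def YA using memb by auto
      then show "pathset k n nt H (proj H Y)" using pathset_mono[OF n psC _ fGo] \<open>H = Go\<close> by simp
    qed
  qed
  show ?thesis using len cov props by blast
qed



lemma chi_node:
  assumes n: "n > 0" and nt: "nt > 0" "nt \<le> real n"
    and fin: "finite (jlabel T1 \<union> jlabel T2)"
    and psA: "pathset k n nt (jlabel T1 \<union> jlabel T2) A"
  shows "\<exists>fam. chi k n nt (JNode T1 T2) A = sum_list (map (\<lambda>(A', B, C). max (chi k n nt T1 B) (chi k n nt T2 C)) fam)
     \<and> (\<forall>(A', B, C) \<in> set fam.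
            pathset k n nt (jlabel T1 \<union> jlabel T2) A' \<and>
            pathset k n nt (jlabel T1) B \<and> pathset k n nt (jlabel T2) C \<and>
            A' \<subseteq> rjoin n (jlabel T1) B (jlabel T2) C)
     \<and> A \<subseteq> (\<Union>(A', B, C) \<in> set fam. A')"
proof -
  define G1 where "G1 = jlabel T1"
  define G2 where "G2 = jlabel T2"
  define P where "P = (\<lambda>fam. (\<forall>(A', B, C) \<in> set fam.
            pathset k n nt (jlabel T1 \<union> jlabel T2) A' \<and>
            pathset k n nt (jlabel T1) B \<and> pathset k n nt (jlabel T2) C \<and>
            A' \<subseteq> rjoin n (jlabel T1) B (jlabel T2) C)
        \<and> A \<subseteq> (\<Union>(A', B, C) \<in> set fam. A'))"
  define f where "f = (\<lambda>fam. sum_list (map (\<lambda>(A'::(int \<Rightarrow> nat) set, B, C). max (chi k n nt T1 B) (chi k n nt T2 C)) fam))"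
  define S where "S = {f fam | fam. P fam}"
  have chiS: "chi k n nt (JNode T1 T2) A = Inf S" unfolding S_def f_def P_def by simp
  have fG1: "finite G1" "finite G2" using fin G1_def G2_def by auto
  have Asub: "A \<subseteq> assigns n (verts (G1 \<union> G2))" using psA unfolding pathset_def is_relation_def G1_def G2_def by simp
  have "finite (G1 \<union> G2)" using fin G1_def G2_def by simp
  hence "finite A" by (rule finite_subset[OF Asub finite_assigns[OF finite_verts]])
  then obtain xs where xs: "set xs = A" using finite_list by blast
  define fam0 where "fam0 = map (\<lambda>\<alpha>. ({\<alpha>}, {restrict \<alpha> (verts G1)}, {restrict \<alpha> (verts G2)})) xs"
  have "P fam0"
    unfolding P_def
  proof (intro conjI)
    show "A \<subseteq> (\<Union>(A', B, C) \<in> set fam0. A')" unfolding fam0_def xs[symmetric] by auto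
    show "\<forall>(A', B, C) \<in> set fam0.
            pathset k n nt (jlabel T1 \<union> jlabel T2) A' \<and>
            pathset k n nt (jlabel T1) B \<and> pathset k n nt (jlabel T2) C \<and>
            A' \<subseteq> rjoin n (jlabel T1) B (jlabel T2) C"
    proof (intro ballI)
      fix t assume "t \<in> set fam0"
      then obtain \<alpha> where a: "\<alpha> \<in> A" "t = ({\<alpha>}, {restrict \<alpha> (verts G1)}, {restrict \<alpha> (verts G2)})"
        unfolding fam0_def xs[symmetric] by auto
      have aV: "\<alpha> \<in> assigns n (verts G1 \<union> verts G2)" using a Asub verts_Un by auto
      have p1: "pathset k n nt G1 {restrict \<alpha> (verts G1)}"
        by (rule singleton_pathset[OF n nt fG1(1)]) (rule restrict_assigns[OF aV], simp)
      have p2: "pathset k n nt G2 {restrict \<alpha> (verts G2)}"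
        by (rule singleton_pathset[OF n nt fG1(2)]) (rule restrict_assigns[OF aV], simp)
      have p0: "pathset k n nt (G1 \<union> G2) {\<alpha>}"
        by (rule singleton_pathset[OF n nt]) (use fG1 aV verts_Un in auto)
      have j: "{\<alpha>} \<subseteq> rjoin n G1 {restrict \<alpha> (verts G1)} G2 {restrict \<alpha> (verts G2)}"
        unfolding rjoin_def using aV by simp
      show "case t of (A', B, C) \<Rightarrow> pathset k n nt (jlabel T1 \<union> jlabel T2) A' \<and>
            pathset k n nt (jlabel T1) B \<and> pathset k n nt (jlabel T2) C \<and>
            A' \<subseteq> rjoin n (jlabel T1) B (jlabel T2) C"
        using a(2) p0 p1 p2 j unfolding G1_def G2_def by simp
    qed
  qed
  hence "S \<noteq> {}" unfolding S_def by blast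
  hence "Inf S \<in> S" by (rule Inf_nat_def1)
  then obtain fam where fe: "Inf S = f fam" and pf: "P fam" unfolding S_def by blast
  have "chi k n nt (JNode T1 T2) A = f fam" using chiS fe by simp
  then show ?thesis using pf unfolding f_def P_def by (intro exI[of _ fam]) blast
qed

lemma main_claim:
  assumes n: "n > 0" and nt: "nt > 0" "nt \<le> real n"
  shows "finite (jlabel T) \<Longrightarrow> jlabel T \<noteq> {} \<Longrightarrow> pathset k n nt (jlabel T) A \<Longrightarrow> bs \<in> branch_lists T \<Longrightarrow>
    \<exists>Xs. length Xs \<le> chi k n nt T A \<and> A \<subseteq> \<Union>(set Xs) \<and>
       (\<forall>X\<in>set Xs. X \<subseteq> assigns n (verts (jlabel T)) \<and> (\<forall>H\<in>set bs. H \<noteq> {} \<longrightarrow> pathset k n nt H (proj H X)))"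
proof (induction T arbitrary: A bs)
  case (JLeaf E)
  show ?case
  proof (cases "A = {}")
    case True
    then show ?thesis by (intro exI[of _ "[]"]) simp
  next
    case False
    have Asub: "A \<subseteq> assigns n (verts E)" using JLeaf.prems(3) unfolding pathset_def is_relation_def by simp
    have "proj E A = A" unfolding proj_def using Asub restrict_id
      by (smt (verit, best) image_cong image_ident subsetD)
    then show ?thesis using JLeaf.prems False Asub
      by (intro exI[of _ "[A]"]) auto
  qed
next
  case (JNode T1 T2)
  define G1 where "G1 = jlabel T1"
  define G2 where "G2 = jlabel T2"
  have fG: "finite G1" "finite G2" using JNode.prems(1) G1_def G2_def by auto
  have atleast1: "chi k n nt T' C \<ge> 1"
    if "T' = T1 \<or> T' = T2" "jlabel T' \<noteq> {}" "pathset k n nt (jlabel T') C" "C \<noteq> {}" for T' C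
  proof -
    obtain bs' where bs': "bs' \<in> branch_lists T'" using bl_ne by blast
    have "finite (jlabel T')" using that(1) fG G1_def G2_def by auto
    have "\<exists>Xs. length Xs \<le> chi k n nt T' C \<and> C \<subseteq> \<Union>(set Xs)"
      using that(1)
    proof
      assume "T' = T1" thus ?thesis using JNode.IH(1)[of C bs'] that bs' \<open>finite (jlabel T')\<close> by blast
    next
      assume "T' = T2" thus ?thesis using JNode.IH(2)[of C bs'] that bs' \<open>finite (jlabel T')\<close> by blast
    qed
    then obtain Xs where "length Xs \<le> chi k n nt T' C" "C \<subseteq> \<Union>(set Xs)" by blast
    then show ?thesis using that(4) by (cases Xs) auto
  qed
  obtain fam where fam: "chi k n nt (JNode T1 T2) A = sum_list (map (\<lambda>(A', B, C). max (chi k n nt T1 B) (chi k n nt T2 C)) fam)"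
     "\<forall>(A', B, C) \<in> set fam.
            pathset k n nt (jlabel T1 \<union> jlabel T2) A' \<and>
            pathset k n nt (jlabel T1) B \<and> pathset k n nt (jlabel T2) C \<and>
            A' \<subseteq> rjoin n (jlabel T1) B (jlabel T2) C"
     "A \<subseteq> (\<Union>(A', B, C) \<in> set fam. A')"
    using chi_node[OF n nt, of T1 T2 k A] JNode.prems by auto
  define c where "c = (\<lambda>(A'::(int \<Rightarrow> nat) set, B, C). max (chi k n nt T1 B) (chi k n nt T2 C))"
  define R where "R = (\<lambda>X. X \<subseteq> assigns n (verts (jlabel (JNode T1 T2))) \<and> (\<forall>H\<in>set bs. H \<noteq> {} \<longrightarrow> pathset k n nt H (proj H X)))"
  have each: "\<exists>xs. length xs \<le> c t \<and> fst t \<subseteq> \<Union>(set xs) \<and> (\<forall>x\<in>set xs. R x)" if t: "t \<in> set fam" for t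
  proof -
    obtain A' B C where tt: "t = (A', B, C)" by (cases t) auto
    have props: "pathset k n nt (G1 \<union> G2) A'" "pathset k n nt G1 B" "pathset k n nt G2 C"
       "A' \<subseteq> rjoin n G1 B G2 C" using fam(2) t tt G1_def G2_def by auto
    have A'sub: "A' \<subseteq> assigns n (verts (G1 \<union> G2))" using props(1) unfolding pathset_def is_relation_def by simp
    have memb: "\<forall>\<gamma>\<in>A'. restrict \<gamma> (verts G1) \<in> B \<and> restrict \<gamma> (verts G2) \<in> C"
      using props(4) unfolding rjoin_def by auto
    from JNode.prems(4) consider (L) bs1 where "bs = G2 # bs1" "bs1 \<in> branch_lists T1"
      | (R) bs2 where "bs = G1 # bs2" "bs2 \<in> branch_lists T2"
      unfolding G1_def G2_def by auto
    then show ?thesis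
    proof cases
      case L
      have "\<exists>Xs. length Xs \<le> max (chi k n nt T1 B) (chi k n nt T2 C) \<and> A' \<subseteq> \<Union>(set Xs) \<and>
       (\<forall>X\<in>set Xs. X \<subseteq> assigns n (verts (G1 \<union> G2)) \<and> (\<forall>H\<in>set (G2 # bs1). H \<noteq> {} \<longrightarrow> pathset k n nt H (proj H X)))"
      proof (rule step[OF n fG(1) fG(2) A'sub memb props(3)])
        show "\<forall>H\<in>set bs1. H \<subseteq> G1" using bl_sub L(2) G1_def by blast
        show "\<exists>Xs. length Xs \<le> chi k n nt T1 B \<and> B \<subseteq> \<Union>(set Xs) \<and>
           (\<forall>X\<in>set Xs. X \<subseteq> assigns n (verts G1) \<and> (\<forall>H\<in>set bs1. H \<noteq> {} \<longrightarrow> pathset k n nt H (proj H X)))"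
          if "G1 \<noteq> {}" using JNode.IH(1)[of B bs1] that fG(1) props(2) L(2) G1_def by blast
        show "1 \<le> chi k n nt T2 C" if "G1 = {}" "C \<noteq> {}"
          using atleast1[of T2 C] that JNode.prems(2) props(3) G1_def G2_def by auto
      qed
      then show ?thesis unfolding c_def R_def tt L(1) G1_def G2_def by simp
    next
      case R
      have A'sub': "A' \<subseteq> assigns n (verts (G2 \<union> G1))" using A'sub by (simp add: Un_commute)
      have memb': "\<forall>\<gamma>\<in>A'. restrict \<gamma> (verts G2) \<in> C \<and> restrict \<gamma> (verts G1) \<in> B" using memb by blast
      have "\<exists>Xs. length Xs \<le> max (chi k n nt T2 C) (chi k n nt T1 B) \<and> A' \<subseteq> \<Union>(set Xs) \<and>
       (\<forall>X\<in>set Xs. X \<subseteq> assigns n (verts (G2 \<union> G1)) \<and> (\<forall>H\<in>set (G1 # bs2). H \<noteq> {} \<longrightarrow> pathset k n nt H (proj H X)))"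
      proof (rule step[OF n fG(2) fG(1) A'sub' memb' props(2)])
        show "\<forall>H\<in>set bs2. H \<subseteq> G2" using bl_sub R(2) G2_def by blast
        show "\<exists>Xs. length Xs \<le> chi k n nt T2 C \<and> C \<subseteq> \<Union>(set Xs) \<and>
           (\<forall>X\<in>set Xs. X \<subseteq> assigns n (verts G2) \<and> (\<forall>H\<in>set bs2. H \<noteq> {} \<longrightarrow> pathset k n nt H (proj H X)))"
          if "G2 \<noteq> {}" using JNode.IH(2)[of C bs2] that fG(2) props(3) R(2) G2_def by blast
        show "1 \<le> chi k n nt T1 B" if "G2 = {}" "B \<noteq> {}"
          using atleast1[of T1 B] that JNode.prems(2) props(2) G1_def G2_def by auto
      qed
      then show ?thesis unfolding c_def R_def tt R(1) G1_def G2_def by (simp add: Un_commute max.commute)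
    qed
  qed
  obtain xs where xs: "length xs \<le> sum_list (map c fam)" "(\<Union>t\<in>set fam. fst t) \<subseteq> \<Union>(set xs)" "\<forall>x\<in>set xs. R x"
    using combine[of fam c R] each by blast
  have "(\<Union>(A', B, C) \<in> set fam. A') = (\<Union>t\<in>set fam. fst t)" by (intro SUP_cong) auto
  hence "A \<subseteq> (\<Union>t\<in>set fam. fst t)" using fam(3) by simp
  moreover have "sum_list (map c fam) = chi k n nt (JNode T1 T2) A" using fam(1) unfolding c_def by simp
  ultimately have l: "length xs \<le> chi k n nt (JNode T1 T2) A" and cv: "A \<subseteq> \<Union>(set xs)"
    using xs(1,2) by (simp only:, blast)
  show ?case using l cv xs(3) unfolding R_def by blast
qed



lemma card_Union_bound:
  "(\<forall>X\<in>set Xs. real (card X) \<le> b) \<Longrightarrow> real (card (\<Union>(set Xs))) \<le> real (length Xs) * b"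
proof (induction Xs)
  case Nil then show ?case by simp
next
  case (Cons X Xs)
  have "card (\<Union>(set (X # Xs))) \<le> card X + card (\<Union>(set Xs))" by (simp add: card_Un_le)
  hence "real (card (\<Union>(set (X # Xs)))) \<le> real (card X) + real (card (\<Union>(set Xs)))" by linarith
  also have "\<dots> \<le> b + real (length Xs) * b" using Cons by (intro add_mono) auto
  finally show ?case by (simp add: algebra_simps)
qed

theorem lemma6p10:
  fixes k n :: nat and nt :: real and T :: jtree and A :: "(int \<Rightarrow> nat) set"
  assumes "k > 0" and "n > 0" and "nt > 0" and "nt \<le> real n"
    and "join_tree (Path k) T"
    and "pathset k n nt (Path k) A"
  shows "real (chi k n nt T A) \<ge> nt ^ Psi T * mu n (Path k) A"
proof -
  have JT: "jlabel T = Path k" using assms(5) unfolding join_tree_def by simp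
  have fP: "finite (jlabel T)" using JT finite_Path by simp
  have neP: "jlabel T \<noteq> {}" using JT assms(1) unfolding Path_def by auto
  define S where "S = {vec_ncomp Cs | Cs. \<exists>C\<in>branch_coverings T. distinct Cs \<and> set Cs = C}"
  define U where "U = \<Union>(set ` branch_lists T)"
  have fU: "finite U" unfolding U_def using bl_finite by auto
  have "S \<subseteq> vec_ncomp ` {xs. set xs \<subseteq> U \<and> length xs \<le> card U}"
  proof
    fix v assume "v \<in> S"
    then obtain Cs bs where c: "v = vec_ncomp Cs" "bs \<in> branch_lists T" "distinct Cs" "set Cs = set bs"
      unfolding S_def branch_coverings_def by auto
    have "set Cs \<subseteq> U" unfolding U_def using c by auto
    moreover have "length Cs \<le> card U" using c(3) card_mono[OF fU \<open>set Cs \<subseteq> U\<close>] distinct_card by metis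
    ultimately show "v \<in> vec_ncomp ` {xs. set xs \<subseteq> U \<and> length xs \<le> card U}" using c(1) by blast
  qed
  hence fS: "finite S" using finite_lists_length_le[OF fU] finite_subset by blast
  obtain bs0 where bs0: "bs0 \<in> branch_lists T" using bl_ne by blast
  have "vec_ncomp (remdups bs0) \<in> S" unfolding S_def branch_coverings_def using bs0 by auto
  hence "S \<noteq> {}" by blast
  hence "Psi T \<in> S" unfolding Psi_def S_def[symmetric] using fS by (rule Max_in[rotated])
  then obtain Cs bs where c: "Psi T = vec_ncomp Cs" "bs \<in> branch_lists T" "distinct Cs" "set Cs = set bs"
    unfolding S_def branch_coverings_def by auto
  obtain Xs where Xs: "length Xs \<le> chi k n nt T A" "A \<subseteq> \<Union>(set Xs)"
    "\<forall>X\<in>set Xs. X \<subseteq> assigns n (verts (jlabel T)) \<and> (\<forall>H\<in>set bs. H \<noteq> {} \<longrightarrow> pathset k n nt H (proj H X))"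
    using main_claim[OF assms(2,3,4) fP neP, where A=A and bs=bs and k=k] assms(6) JT c(2) by auto
  have UC: "\<Union>(set Cs) = Path k" using c(4) bl_union[OF c(2)] JT by simp
  define b where "b = real n ^ card (verts (Path k)) * (1/nt) ^ Psi T"
  have cb: "real (card X) \<le> b" if X: "X \<in> set Xs" for X
  proof -
    have "real (card X) \<le> real n ^ card (verts (\<Union>(set Cs))) * (1/nt) ^ vec_ncomp Cs"
      by (rule chain_rule[OF assms(2,3)]) (use UC Xs(3) X JT c(4) in auto)
    thus ?thesis unfolding b_def UC c(1) .
  qed
  have fA: "finite (\<Union>(set Xs))"
  proof -
    have "finite (assigns n (verts (jlabel T)))" using fP finite_verts finite_assigns by blast
    moreover have "\<Union>(set Xs) \<subseteq> assigns n (verts (jlabel T))" using Xs(3) by blast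
    ultimately show ?thesis using finite_subset by blast
  qed
  have "real (card A) \<le> real (card (\<Union>(set Xs)))" using card_mono[OF fA Xs(2)] by simp
  also have "\<dots> \<le> real (length Xs) * b" using card_Union_bound cb by blast
  also have "\<dots> \<le> real (chi k n nt T A) * b"
    by (rule mult_right_mono) (use Xs(1) assms(3) b_def in auto)
  finally have cA: "real (card A) \<le> real (chi k n nt T A) * b" .
  have npos: "real n ^ card (verts (Path k)) > 0" using assms(2) by simp
  have "nt ^ Psi T * mu n (Path k) A = nt ^ Psi T * real (card A) / real n ^ card (verts (Path k))"
    unfolding mu_def by simp
  also have "\<dots> \<le> nt ^ Psi T * (real (chi k n nt T A) * b) / real n ^ card (verts (Path k))"
    by (intro divide_right_mono mult_left_mono cA) (use assms(3) in auto)
  also have "\<dots> = real (chi k n nt T A)"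
    unfolding b_def using npos assms(3) by (simp add: field_simps power_one_over)
  finally show ?thesis .
qed

end
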